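(* Let $G$ be a group generated by $r$ elements, let $\pi:(0,1]\to(0,1]$ be a non-decreasing function with $\pi(\gamma)\to0$ as $\gamma\to0$, let $M=(\mu_n)_{n=1}^\infty$ be a sequence of probability measures on $G$ that detects index uniformly at rate $\pi$, and suppose that $\textup{dc}_M(G)\ge\alpha>0$. Then $G$ has an abelian subgroup of index bounded by a quantity depending only on $r$, $\pi$ and $\alpha$.
   Context: A sequence $M=(\mu_n)$ of probability measures on $G$ detects index uniformly at rate $\pi$ if for every $\varepsilon>0$ there exists $N=N(\varepsilon)\in\mathbb{N}$ such that for every $m\in\mathbb{N}$ and every subgroup $H$ of $G$ with $[G:H]\ge m$ (including infinite index) we have $\mu_n(H)\le\pi(\frac{1}{m})+\varepsilon$ for every $n\ge N$. For a probability measure $\mu$ on $G$, $\textup{dc}_\mu(G)=(\mu\times\mu)(\{(x,y):xy=yx\})$, and $\textup{dc}_M(G)=\limsup_{n\to\infty}\textup{dc}_{\mu_n}(G)$. *)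

theory Defs
  imports "HOL-Algebra.Generated_Groups" "HOL-Algebra.Coset"
          "HOL-Probability.Probability_Mass_Function"
          "HOL-Library.Extended_Real"
begin

definition index_ge :: "('a, 'b) monoid_scheme \<Rightarrow> 'a set \<Rightarrow> nat \<Rightarrow> bool" where
  "index_ge G H m \<longleftrightarrow> infinite (rcosets\<^bsub>G\<^esub> H) \<or> card (rcosets\<^bsub>G\<^esub> H) \<ge> m"

text \<open>A probability measure on (the countable, discrete group) G is a pmf supported in carrier G.\<close>
definition prob_on :: "('a, 'b) monoid_scheme \<Rightarrow> 'a pmf \<Rightarrow> bool" where
  "prob_on G \<mu> \<longleftrightarrow> set_pmf \<mu> \<subseteq> carrier G"

definition detects_index_uniformly ::
  "('a, 'b) monoid_scheme \<Rightarrow> (nat \<Rightarrow> 'a pmf) \<Rightarrow> (real \<Rightarrow> real) \<Rightarrow> bool" where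
  "detects_index_uniformly G \<mu> \<pi> \<longleftrightarrow>
     (\<forall>\<epsilon>>0. \<exists>N. \<forall>m::nat. m \<ge> 1 \<longrightarrow> (\<forall>H. subgroup H G \<and> index_ge G H m \<longrightarrow>
        (\<forall>n\<ge>N. measure_pmf.prob (\<mu> n) H \<le> \<pi> (1 / real m) + \<epsilon>)))"

definition dc :: "('a, 'b) monoid_scheme \<Rightarrow> 'a pmf \<Rightarrow> real" where
  "dc G \<mu> = measure_pmf.prob (pair_pmf \<mu> \<mu>) {(x, y). x \<otimes>\<^bsub>G\<^esub> y = y \<otimes>\<^bsub>G\<^esub> x}"

definition dc_seq :: "('a, 'b) monoid_scheme \<Rightarrow> (nat \<Rightarrow> 'a pmf) \<Rightarrow> ereal" where
  "dc_seq G \<mu> = limsup (\<lambda>n. ereal (dc G (\<mu> n)))"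

end

theory Submission
  imports Defs "HOL-Library.FuncSet"
begin

lemma bij_inv_in: "bij_betw l A {0..<(k::nat)} \<Longrightarrow> j < k \<Longrightarrow> inv_into A l j \<in> A"
proof -
  assume "bij_betw l A {0..<k}" "j < k"
  then have "j \<in> l ` A" by (simp add: bij_betw_def)
  then show ?thesis by (rule inv_into_into)
qed

lemma (in group) rcosets_carrier: "subgroup H G \<Longrightarrow> A \<in> rcosets H \<Longrightarrow> A \<subseteq> carrier G"
proof -
  assume H: "subgroup H G" and A: "A \<in> rcosets H"
  obtain a where a: "a \<in> carrier G" "A = H #> a" using A unfolding RCOSETS_def by blast
  then show ?thesis using r_coset_subset_G[OF subgroup.subset[OF H] a(1)] by simp
qed

lemma (in group) rcosets_mult:
  assumes H: "subgroup H G" and A: "A \<in> rcosets H" and g: "g \<in> carrier G"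
  shows "A #> g \<in> rcosets H"
proof -
  obtain a where a: "a \<in> carrier G" "A = H #> a" using A unfolding RCOSETS_def by blast
  have "A #> g = H #> (a \<otimes> g)" using a g coset_mult_assoc subgroup.subset[OF H] by simp
  then show ?thesis using rcosetsI[OF subgroup.subset[OF H], of "a \<otimes> g"] a g by simp
qed

lemma (in group) sigma_agree:
  assumes H1: "subgroup H1 G" and H2: "subgroup H2 G"
    and l1: "bij_betw l1 (rcosets H1) {0..<(k::nat)}" and l2: "bij_betw l2 (rcosets H2) {0..<k}"
    and S: "S \<subseteq> carrier G"
    and ag: "\<And>s j. s \<in> S \<Longrightarrow> j < k \<Longrightarrow>
       l1 (inv_into (rcosets H1) l1 j #> s) = l2 (inv_into (rcosets H2) l2 j #> s)
     \<and> l1 (inv_into (rcosets H1) l1 j #> inv s) = l2 (inv_into (rcosets H2) l2 j #> inv s)"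
    and g: "g \<in> generate G S"
  shows "\<forall>j<k. l1 (inv_into (rcosets H1) l1 j #> g) = l2 (inv_into (rcosets H2) l2 j #> g)"
  using g
proof (induction rule: generate.induct)
  case one
  have "\<And>j. j < k \<Longrightarrow> l1 (inv_into (rcosets H1) l1 j #> \<one>) = j"
  proof -
    fix j assume "j < k"
    then have "inv_into (rcosets H1) l1 j \<in> rcosets H1"
      using bij_inv_in l1 \<open>j<k\<close> by blast
    then have "inv_into (rcosets H1) l1 j \<subseteq> carrier G"
      using H1 rcosets_carrier by blast
    then show "l1 (inv_into (rcosets H1) l1 j #> \<one>) = j"
      using bij_betw_inv_into_right[OF l1, of j] \<open>j<k\<close> by simp
  qed
  moreover have "\<And>j. j < k \<Longrightarrow> l2 (inv_into (rcosets H2) l2 j #> \<one>) = j"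
  proof -
    fix j assume "j < k"
    then have "inv_into (rcosets H2) l2 j \<in> rcosets H2"
      using bij_inv_in l2 \<open>j<k\<close> by blast
    then have "inv_into (rcosets H2) l2 j \<subseteq> carrier G"
      using H2 rcosets_carrier by blast
    then show "l2 (inv_into (rcosets H2) l2 j #> \<one>) = j"
      using bij_betw_inv_into_right[OF l2, of j] \<open>j<k\<close> by simp
  qed
  ultimately show ?case by auto
next
  case (incl h)
  show ?case
  proof (intro allI impI)
    fix j assume "j < k"
    from ag[OF incl.hyps this] show "l1 (inv_into (rcosets H1) l1 j #> h) = l2 (inv_into (rcosets H2) l2 j #> h)"
      by (rule conjunct1)
  qed
next
  case (inv h)
  show ?case
  proof (intro allI impI)
    fix j assume "j < k"
    from ag[OF inv.hyps this] show "l1 (inv_into (rcosets H1) l1 j #> inv h) = l2 (inv_into (rcosets H2) l2 j #> inv h)"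
      by (rule conjunct2)
  qed
next
  case (eng g h)
  have gc: "g \<in> carrier G" "h \<in> carrier G" using eng.hyps S generate_in_carrier by auto
  show ?case
  proof (intro allI impI)
    fix j assume j: "j < k"
    define A1 where "A1 = inv_into (rcosets H1) l1 j"
    define A2 where "A2 = inv_into (rcosets H2) l2 j"
    have A1r: "A1 \<in> rcosets H1" unfolding A1_def
      using bij_inv_in l1 j by blast
    have A2r: "A2 \<in> rcosets H2" unfolding A2_def
      using bij_inv_in l2 j by blast
    have A1c: "A1 \<subseteq> carrier G" using A1r H1
      using rcosets_carrier by blast
    have A2c: "A2 \<subseteq> carrier G" using A2r H2
      using rcosets_carrier by blast
    have B1r: "A1 #> g \<in> rcosets H1"
      using rcosets_mult[OF H1 A1r gc(1)] .
    have B2r: "A2 #> g \<in> rcosets H2"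
      using rcosets_mult[OF H2 A2r gc(1)] .
    define j' where "j' = l1 (A1 #> g)"
    have j'2: "j' = l2 (A2 #> g)" using eng.IH(1) j unfolding j'_def A1_def A2_def by blast
    have j'k: "j' < k" using B1r l1 unfolding j'_def by (auto simp: bij_betw_def)
    have e1: "inv_into (rcosets H1) l1 j' = A1 #> g"
      unfolding j'_def using B1r l1 by (simp add: bij_betw_def inv_into_f_f)
    have e2: "inv_into (rcosets H2) l2 j' = A2 #> g"
      unfolding j'2 using B2r l2 by (simp add: bij_betw_def inv_into_f_f)
    have "l1 (A1 #> (g \<otimes> h)) = l1 (inv_into (rcosets H1) l1 j' #> h)"
      using e1 A1c gc by (simp add: coset_mult_assoc)
    also have "\<dots> = l2 (inv_into (rcosets H2) l2 j' #> h)" using eng.IH(2) j'k by blast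
    also have "\<dots> = l2 (A2 #> (g \<otimes> h))"
      using e2 A2c gc by (simp add: coset_mult_assoc)
    finally show "l1 (inv_into (rcosets H1) l1 j #> (g \<otimes> h)) = l2 (inv_into (rcosets H2) l2 j #> (g \<otimes> h))"
      unfolding A1_def A2_def .
  qed
qed

lemma (in group) code_inj:
  assumes H1: "subgroup H1 G" and H2: "subgroup H2 G"
    and l1: "bij_betw l1 (rcosets H1) {0..<(k::nat)}" and l2: "bij_betw l2 (rcosets H2) {0..<k}"
    and S: "S \<subseteq> carrier G" and gen: "generate G S = carrier G"
    and ag: "\<And>s j. s \<in> S \<Longrightarrow> j < k \<Longrightarrow>
       l1 (inv_into (rcosets H1) l1 j #> s) = l2 (inv_into (rcosets H2) l2 j #> s)
     \<and> l1 (inv_into (rcosets H1) l1 j #> inv s) = l2 (inv_into (rcosets H2) l2 j #> inv s)"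
    and base: "l1 H1 = l2 H2"
  shows "H1 = H2"
proof -
  have H1r: "H1 \<in> rcosets H1" using H1 rcosetsI[of H1 \<one>] by (simp add: subgroup.subset)
  have H2r: "H2 \<in> rcosets H2" using H2 rcosetsI[of H2 \<one>] by (simp add: subgroup.subset)
  define j0 where "j0 = l1 H1"
  have j0k: "j0 < k" using l1 H1r unfolding j0_def by (auto simp: bij_betw_def)
  have i1: "inv_into (rcosets H1) l1 j0 = H1" unfolding j0_def using l1 H1r by (simp add: bij_betw_def inv_into_f_f)
  have i2: "inv_into (rcosets H2) l2 j0 = H2" unfolding j0_def base using l2 H2r by (simp add: bij_betw_def inv_into_f_f)
  have key: "\<And>g. g \<in> carrier G \<Longrightarrow> l1 (H1 #> g) = l2 (H2 #> g)"
  proof -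
    fix g assume "g \<in> carrier G"
    then have "g \<in> generate G S" using gen by simp
    from sigma_agree[OF H1 H2 l1 l2 S ag this] j0k
    have "l1 (inv_into (rcosets H1) l1 j0 #> g) = l2 (inv_into (rcosets H2) l2 j0 #> g)" by blast
    then show "l1 (H1 #> g) = l2 (H2 #> g)" unfolding i1 i2 .
  qed
  have mem: "\<And>H l g. subgroup H G \<Longrightarrow> bij_betw l (rcosets H) {0..<k} \<Longrightarrow> g \<in> carrier G \<Longrightarrow>
      (g \<in> H) = (l (H #> g) = l H)"
  proof -
    fix H l g assume H: "subgroup H G" and l: "bij_betw l (rcosets H) {0..<k}" and g: "g \<in> carrier G"
    have Hr: "H \<in> rcosets H" using H rcosetsI[of H \<one>] by (simp add: subgroup.subset)
    have Hg: "H #> g \<in> rcosets H" using H g rcosetsI by (simp add: subgroup.subset)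
    have "(l (H #> g) = l H) = (H #> g = H)" using inj_on_eq_iff[OF bij_betw_imp_inj_on[OF l] Hg Hr] .
    also have "\<dots> = (g \<in> H)" 
    proof
      assume "H #> g = H" then show "g \<in> H" by (rule coset_join1[OF _ g H])
    next
      assume "g \<in> H" then show "H #> g = H" by (rule coset_join2[OF g H])
    qed
    finally show "(g \<in> H) = (l (H #> g) = l H)" by (rule sym)
  qed
  have s1: "H1 \<subseteq> H2"
  proof
    fix g assume "g \<in> H1"
    then have g: "g \<in> carrier G" using H1 subgroup.subset by blast
    have "l1 (H1 #> g) = l1 H1" using mem[OF H1 l1 g] \<open>g \<in> H1\<close> by blast
    then have "l2 (H2 #> g) = l2 H2" using key[OF g] base by argo
    then show "g \<in> H2" using mem[OF H2 l2 g] by blast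
  qed
  have s2: "H2 \<subseteq> H1"
  proof
    fix g assume "g \<in> H2"
    then have g: "g \<in> carrier G" using H2 subgroup.subset by blast
    have "l2 (H2 #> g) = l2 H2" using mem[OF H2 l2 g] \<open>g \<in> H2\<close> by blast
    then have "l1 (H1 #> g) = l1 H1" using key[OF g] base by argo
    then show "g \<in> H1" using mem[OF H1 l1 g] by blast
  qed
  from s1 s2 show ?thesis by (rule equalityI)
qed

definition codes :: "nat \<Rightarrow> nat \<Rightarrow> (nat \<times> nat \<times> (nat \<times> nat \<Rightarrow> nat) \<times> (nat \<times> nat \<Rightarrow> nat)) set" where
  "codes r K = {0..K} \<times> {0..<K} \<times> (({0..<r} \<times> {0..<K}) \<rightarrow>\<^sub>E {0..<K}) \<times> (({0..<r} \<times> {0..<K}) \<rightarrow>\<^sub>E {0..<K})"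

lemma finite_codes: "finite (codes r K)"
  unfolding codes_def by (intro finite_cartesian_product finite_PiE) auto

lemma (in group) count_subgroups:
  assumes S: "S \<subseteq> carrier G" and fS: "finite S" and cS: "card S \<le> r"
    and gen: "generate G S = carrier G" and K: "K \<ge> 1"
  shows "finite {H. subgroup H G \<and> finite (rcosets H) \<and> card (rcosets H) \<le> K}
       \<and> card {H. subgroup H G \<and> finite (rcosets H) \<and> card (rcosets H) \<le> K} \<le> card (codes r K)"
proof -
  define \<H> where "\<H> = {H. subgroup H G \<and> finite (rcosets H) \<and> card (rcosets H) \<le> K}"
  obtain e where e: "bij_betw e {0..<card S} S" using ex_bij_betw_nat_finite[OF fS] by blast
  define lab where "lab H = (SOME l. bij_betw l (rcosets H) {0..<card (rcosets H)})" for H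
  have lab: "bij_betw (lab H) (rcosets H) {0..<card (rcosets H)}" if "H \<in> \<H>" for H
  proof -
    have "finite (rcosets H)" using that unfolding \<H>_def by blast
    then have "\<exists>l. bij_betw l (rcosets H) {0..<card (rcosets H)}" by (rule ex_bij_betw_finite_nat)
    then show ?thesis unfolding lab_def by (rule someI_ex)
  qed
  define fcode where "fcode H x = restrict (\<lambda>(i, j). if i < card S \<and> j < card (rcosets H)
      then lab H (inv_into (rcosets H) (lab H) j #> x i) else 0) ({0..<r} \<times> {0..<K})" for H and x :: "nat \<Rightarrow> 'a"
  define code where "code H = (card (rcosets H), lab H H, fcode H e, fcode H (\<lambda>i. inv (e i)))" for H
  have Hr: "H \<in> rcosets H" if "H \<in> \<H>" for H
    using that rcosetsI[of H \<one>] by (simp add: \<H>_def subgroup.subset)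
  have fc: "fcode H x \<in> ({0..<r} \<times> {0..<K}) \<rightarrow>\<^sub>E {0..<K}"
    if H: "H \<in> \<H>" and x: "\<And>i. i < card S \<Longrightarrow> x i \<in> carrier G" for H x
  proof -
    have sg: "subgroup H G" and kK: "card (rcosets H) \<le> K" using H unfolding \<H>_def by auto
    have "(if i < card S \<and> j < card (rcosets H)
      then lab H (inv_into (rcosets H) (lab H) j #> x i) else 0) < K" for i j
    proof (cases "i < card S \<and> j < card (rcosets H)")
      case True
      have "inv_into (rcosets H) (lab H) j \<in> rcosets H" using bij_inv_in[OF lab[OF H]] True by blast
      then have "inv_into (rcosets H) (lab H) j #> x i \<in> rcosets H"
        using rcosets_mult[OF sg] x True by blast
      then have "lab H (inv_into (rcosets H) (lab H) j #> x i) < card (rcosets H)"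
        using lab[OF H] by (auto simp: bij_betw_def)
      then show ?thesis using True kK by simp
    next
      case False then show ?thesis unfolding if_not_P[OF False] using K by simp
    qed
    then show ?thesis unfolding fcode_def by (auto simp: PiE_iff)
  qed
  have ein: "e i \<in> carrier G" if "i < card S" for i
    using e that S by (auto simp: bij_betw_def)
  have code_in: "code H \<in> codes r K" if H: "H \<in> \<H>" for H
  proof -
    have kK: "card (rcosets H) \<le> K" using H unfolding \<H>_def by auto
    have "lab H H < card (rcosets H)" using lab[OF H] Hr[OF H] by (auto simp: bij_betw_def)
    then show ?thesis unfolding code_def codes_def
      using kK fc[OF H] ein by auto
  qed
  have inj: "inj_on code \<H>"
  proof (rule inj_onI)
    fix H1 H2 assume H1: "H1 \<in> \<H>" and H2: "H2 \<in> \<H>" and eq: "code H1 = code H2"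
    define k where "k = card (rcosets H1)"
    have k2: "card (rcosets H2) = k" using eq unfolding code_def k_def by simp
    have kK: "k \<le> K" using H1 unfolding \<H>_def k_def by auto
    have l1: "bij_betw (lab H1) (rcosets H1) {0..<k}" using lab[OF H1] unfolding k_def .
    have l2: "bij_betw (lab H2) (rcosets H2) {0..<k}" using lab[OF H2] unfolding k2 .
    have base: "lab H1 H1 = lab H2 H2" using eq unfolding code_def by simp
    have f1: "fcode H1 e = fcode H2 e" and f2: "fcode H1 (\<lambda>i. inv (e i)) = fcode H2 (\<lambda>i. inv (e i))"
      using eq unfolding code_def by simp_all
    have ag: "lab H1 (inv_into (rcosets H1) (lab H1) j #> s) = lab H2 (inv_into (rcosets H2) (lab H2) j #> s)
     \<and> lab H1 (inv_into (rcosets H1) (lab H1) j #> inv s) = lab H2 (inv_into (rcosets H2) (lab H2) j #> inv s)"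
      if s: "s \<in> S" and j: "j < k" for s j
    proof -
      have "s \<in> e ` {0..<card S}" using e s by (simp add: bij_betw_def)
      then obtain i where i: "i < card S" "s = e i" by auto
      have dom: "(i, j) \<in> {0..<r} \<times> {0..<K}" using i cS j kK by auto
      have "fcode H1 e (i, j) = fcode H2 e (i, j)" using f1 by simp
      then have A: "lab H1 (inv_into (rcosets H1) (lab H1) j #> e i) = lab H2 (inv_into (rcosets H2) (lab H2) j #> e i)"
        using dom i j k2 unfolding fcode_def k_def by simp
      have "fcode H1 (\<lambda>i. inv (e i)) (i, j) = fcode H2 (\<lambda>i. inv (e i)) (i, j)" using f2 by simp
      then have B: "lab H1 (inv_into (rcosets H1) (lab H1) j #> inv (e i)) = lab H2 (inv_into (rcosets H2) (lab H2) j #> inv (e i))"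
        using dom i j k2 unfolding fcode_def k_def by simp
      show ?thesis using A B i by simp
    qed
    show "H1 = H2"
      by (rule code_inj[OF _ _ l1 l2 S gen ag base]) (use H1 H2 in \<open>auto simp: \<H>_def\<close>)
  qed
  have fin: "finite \<H>"
    using inj_on_finite[OF inj _ finite_codes[of r K]] code_in by blast
  have "card \<H> \<le> card (codes r K)"
    using card_inj_on_le[OF inj _ finite_codes] code_in by blast
  then show ?thesis using fin unfolding \<H>_def by blast
qed



lemma (in group) rcos_Int:
  assumes H1: "subgroup H1 G" and H2: "subgroup H2 G" and a: "a \<in> carrier G"
  shows "(H1 \<inter> H2) #> a = (H1 #> a) \<inter> (H2 #> a)"
proof
  show "(H1 \<inter> H2) #> a \<subseteq> (H1 #> a) \<inter> (H2 #> a)" unfolding r_coset_def by blast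
next
  show "(H1 #> a) \<inter> (H2 #> a) \<subseteq> (H1 \<inter> H2) #> a"
  proof
    fix x assume "x \<in> (H1 #> a) \<inter> (H2 #> a)"
    then obtain h1 h2 where h: "h1 \<in> H1" "h2 \<in> H2" "x = h1 \<otimes> a" "x = h2 \<otimes> a"
      unfolding r_coset_def by blast
    have c: "h1 \<in> carrier G" "h2 \<in> carrier G"
      using h H1 H2 subgroup.mem_carrier by auto
    have "h1 = h2" using h(3,4) c a right_cancel by blast
    then show "x \<in> (H1 \<inter> H2) #> a" using h unfolding r_coset_def by blast
  qed
qed

lemma (in group) index_Int:
  assumes H1: "subgroup H1 G" and H2: "subgroup H2 G"
    and f1: "finite (rcosets H1)" and f2: "finite (rcosets H2)"
  shows "finite (rcosets (H1 \<inter> H2)) \<and> card (rcosets (H1 \<inter> H2)) \<le> card (rcosets H1) * card (rcosets H2)"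
proof -
  have sub: "rcosets (H1 \<inter> H2) \<subseteq> (\<lambda>(A, B). A \<inter> B) ` ((rcosets H1) \<times> (rcosets H2))"
  proof
    fix C assume "C \<in> rcosets (H1 \<inter> H2)"
    then obtain a where a: "a \<in> carrier G" "C = (H1 \<inter> H2) #> a" unfolding RCOSETS_def by blast
    then have "C = (\<lambda>(A, B). A \<inter> B) (H1 #> a, H2 #> a)" using rcos_Int[OF H1 H2 a(1)] by simp
    moreover have "(H1 #> a, H2 #> a) \<in> (rcosets H1) \<times> (rcosets H2)"
      using a(1) H1 H2 rcosetsI subgroup.subset by blast
    ultimately show "C \<in> (\<lambda>(A, B). A \<inter> B) ` ((rcosets H1) \<times> (rcosets H2))" by blast
  qed
  have fin: "finite ((\<lambda>(A, B). A \<inter> B) ` ((rcosets H1) \<times> (rcosets H2)))" using f1 f2 by blast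
  have "card (rcosets (H1 \<inter> H2)) \<le> card ((\<lambda>(A, B). A \<inter> B) ` ((rcosets H1) \<times> (rcosets H2)))"
    by (rule card_mono[OF fin sub])
  also have "\<dots> \<le> card ((rcosets H1) \<times> (rcosets H2))" by (rule card_image_le) (use f1 f2 in blast)
  also have "\<dots> = card (rcosets H1) * card (rcosets H2)" by (rule card_cartesian_product)
  finally show ?thesis using finite_subset[OF sub fin] by blast
qed

lemma (in group) rcosets_carrier_self: "rcosets (carrier G) = {carrier G}"
proof
  show "rcosets (carrier G) \<subseteq> {carrier G}"
    unfolding RCOSETS_def using coset_join2[OF _ subgroup_self] by auto
next
  show "{carrier G} \<subseteq> rcosets (carrier G)"
    using rcosetsI[of "carrier G" \<one>] by simp
qed

lemma (in group) index_Inter: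
  assumes "finite F"
  shows "(\<forall>H\<in>F. subgroup H G \<and> finite (rcosets H) \<and> card (rcosets H) \<le> K) \<Longrightarrow>
    subgroup (carrier G \<inter> \<Inter>F) G \<and> finite (rcosets (carrier G \<inter> \<Inter>F))
    \<and> card (rcosets (carrier G \<inter> \<Inter>F)) \<le> K ^ card F"
  using assms
proof (induction F rule: finite_induct)
  case empty
  then show ?case using subgroup_self rcosets_carrier_self by simp
next
  case (insert H F)
  then have IH: "subgroup (carrier G \<inter> \<Inter>F) G" "finite (rcosets (carrier G \<inter> \<Inter>F))"
      "card (rcosets (carrier G \<inter> \<Inter>F)) \<le> K ^ card F" by auto
  have HH: "subgroup H G" "finite (rcosets H)" "card (rcosets H) \<le> K" using insert.prems by auto
  have eq: "carrier G \<inter> \<Inter>(insert H F) = H \<inter> (carrier G \<inter> \<Inter>F)" by auto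
  have I: "finite (rcosets (H \<inter> (carrier G \<inter> \<Inter>F)))"
      "card (rcosets (H \<inter> (carrier G \<inter> \<Inter>F))) \<le> card (rcosets H) * card (rcosets (carrier G \<inter> \<Inter>F))"
    using index_Int[OF HH(1) IH(1) HH(2) IH(2)] by auto
  have "card (rcosets H) * card (rcosets (carrier G \<inter> \<Inter>F)) \<le> K * K ^ card F"
    using HH(3) IH(3) by (rule mult_mono) auto
  then have "card (rcosets (H \<inter> (carrier G \<inter> \<Inter>F))) \<le> K ^ card (insert H F)"
    using I(2) insert.hyps by simp
  moreover have "subgroup (H \<inter> (carrier G \<inter> \<Inter>F)) G" using subgroups_Inter_pair[OF HH(1) IH(1)] .
  ultimately show ?case unfolding eq using I(1) by blast
qed

lemma (in group) centralizer_subgroup: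
  assumes x: "x \<in> carrier G"
  shows "subgroup {y \<in> carrier G. x \<otimes> y = y \<otimes> x} G"
proof (rule subgroupI)
  show "{y \<in> carrier G. x \<otimes> y = y \<otimes> x} \<subseteq> carrier G" by blast
  show "{y \<in> carrier G. x \<otimes> y = y \<otimes> x} \<noteq> {}" using x by auto
next
  fix a assume a: "a \<in> {y \<in> carrier G. x \<otimes> y = y \<otimes> x}"
  then have ac: "a \<in> carrier G" and e: "x \<otimes> a = a \<otimes> x" by auto
  have li: "inv a \<otimes> a = \<one>" using ac by simp
  have "x \<otimes> inv a = \<one> \<otimes> (x \<otimes> inv a)" using ac x by simp
  also have "\<dots> = (inv a \<otimes> a) \<otimes> (x \<otimes> inv a)" by (simp only: li)
  also have "\<dots> = inv a \<otimes> (a \<otimes> x) \<otimes> inv a" using ac x by (simp only: m_assoc m_closed inv_closed)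
  also have "\<dots> = inv a \<otimes> (x \<otimes> a) \<otimes> inv a" using e by simp
  also have "\<dots> = inv a \<otimes> x" using ac x by (simp add: m_assoc)
  finally have "x \<otimes> inv a = inv a \<otimes> x" .
  then show "inv a \<in> {y \<in> carrier G. x \<otimes> y = y \<otimes> x}" using ac by simp
next
  fix a b assume a: "a \<in> {y \<in> carrier G. x \<otimes> y = y \<otimes> x}" and b: "b \<in> {y \<in> carrier G. x \<otimes> y = y \<otimes> x}"
  then have c: "a \<in> carrier G" "b \<in> carrier G" and ea: "x \<otimes> a = a \<otimes> x" and eb: "x \<otimes> b = b \<otimes> x" by auto
  have "x \<otimes> (a \<otimes> b) = (x \<otimes> a) \<otimes> b" using c x by (simp add: m_assoc)
  also have "\<dots> = a \<otimes> (x \<otimes> b)" using c x ea by (simp add: m_assoc)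
  also have "\<dots> = (a \<otimes> b) \<otimes> x" using c x eb by (simp add: m_assoc)
  finally show "a \<otimes> b \<in> {y \<in> carrier G. x \<otimes> y = y \<otimes> x}" using c by simp
qed

lemma (in group) commute_generate:
  assumes a: "a \<in> carrier G" and X: "X \<subseteq> carrier G" and com: "\<And>x. x \<in> X \<Longrightarrow> a \<otimes> x = x \<otimes> a"
    and y: "y \<in> generate G X"
  shows "a \<otimes> y = y \<otimes> a"
proof -
  have "generate G X \<subseteq> {y \<in> carrier G. a \<otimes> y = y \<otimes> a}"
    by (rule generate_subgroup_incl) (use X com centralizer_subgroup[OF a] in auto)
  then show ?thesis using y by blast
qed

lemma dc_bound:
  fixes G (structure) and \<mu> :: "'a pmf" and t :: real
  assumes t: "t \<ge> 0"
  shows "dc G \<mu> \<le> measure_pmf.prob \<mu> {x. measure_pmf.prob \<mu> {y. x \<otimes> y = y \<otimes> x} > t} + t"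
proof -
  define X where "X = {x. measure_pmf.prob \<mu> {y. x \<otimes> y = y \<otimes> x} > t}"
  define E where "E = {(x, y). x \<otimes> y = y \<otimes> x}"
  have "emeasure (measure_pmf (pair_pmf \<mu> \<mu>)) E = (\<integral>\<^sup>+z. indicator E z \<partial>pair_pmf \<mu> \<mu>)"
    by simp
  also have "\<dots> = (\<integral>\<^sup>+a. \<integral>\<^sup>+b. indicator E (a, b) \<partial>\<mu> \<partial>\<mu>)" by (rule nn_integral_pair_pmf')
  also have "\<dots> = (\<integral>\<^sup>+a. emeasure \<mu> {y. a \<otimes> y = y \<otimes> a} \<partial>\<mu>)"
  proof (rule nn_integral_cong)
    fix a
    have "(\<lambda>b. indicator E (a, b) :: ennreal) = indicator {y. a \<otimes> y = y \<otimes> a}"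
      by (auto simp: E_def indicator_def)
    then show "(\<integral>\<^sup>+b. indicator E (a, b) \<partial>\<mu>) = emeasure \<mu> {y. a \<otimes> y = y \<otimes> a}" by simp
  qed
  also have "\<dots> \<le> (\<integral>\<^sup>+a. indicator X a + ennreal t \<partial>\<mu>)"
  proof (rule nn_integral_mono)
    fix a
    show "emeasure \<mu> {y. a \<otimes> y = y \<otimes> a} \<le> indicator X a + ennreal t"
    proof (cases "a \<in> X")
      case True
      have "emeasure \<mu> {y. a \<otimes> y = y \<otimes> a} \<le> 1" by (simp add: measure_pmf.emeasure_le_1)
      also have "\<dots> \<le> indicator X a + ennreal t" using True by simp
      finally show ?thesis .
    next
      case False
      then have "measure_pmf.prob \<mu> {y. a \<otimes> y = y \<otimes> a} \<le> t" unfolding X_def by simp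
      then have "emeasure \<mu> {y. a \<otimes> y = y \<otimes> a} \<le> ennreal t"
        by (simp add: measure_pmf.emeasure_eq_measure ennreal_leI)
      then show ?thesis by (rule order_trans) (rule add_increasing, auto)
    qed
  qed
  also have "\<dots> = emeasure \<mu> X + ennreal t"
    by (simp add: nn_integral_add measure_pmf.emeasure_space_1)
  finally have "emeasure (measure_pmf (pair_pmf \<mu> \<mu>)) E \<le> emeasure \<mu> X + ennreal t" .
  then have "ennreal (measure_pmf.prob (pair_pmf \<mu> \<mu>) E) \<le> ennreal (measure_pmf.prob \<mu> X + t)"
    by (simp add: measure_pmf.emeasure_eq_measure t ennreal_plus)
  moreover have "0 \<le> measure_pmf.prob \<mu> X + t" using t by simp
  ultimately have "measure_pmf.prob (pair_pmf \<mu> \<mu>) E \<le> measure_pmf.prob \<mu> X + t"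
    using ennreal_le_iff by blast
  then show ?thesis unfolding dc_def E_def X_def .
qed


lemma (in group) main_bound:
  fixes \<mu> :: "'a pmf" and \<alpha> :: real
  assumes S: "S \<subseteq> carrier G" and fS: "finite S" and cS: "card S \<le> r"
    and gen: "generate G S = carrier G" and K: "K \<ge> 1"
    and pon: "set_pmf \<mu> \<subseteq> carrier G"
    and det: "\<And>H. subgroup H G \<Longrightarrow> measure_pmf.prob \<mu> H > \<alpha> / 4 \<Longrightarrow> finite (rcosets H) \<and> card (rcosets H) \<le> K"
    and dcb: "dc G \<mu> > \<alpha> / 2" and \<alpha>: "\<alpha> > 0"
  shows "\<exists>H. subgroup H G \<and> (\<forall>x\<in>H. \<forall>y\<in>H. x \<otimes> y = y \<otimes> x) \<and>
                finite (rcosets H) \<and> card (rcosets H) \<le> K ^ card (codes r K) * K"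
proof -
  define X where "X = {x. measure_pmf.prob \<mu> {y. x \<otimes> y = y \<otimes> x} > \<alpha> / 4}"
  define X' where "X' = X \<inter> carrier G"
  define Cz where "Cz x = {y \<in> carrier G. x \<otimes> y = y \<otimes> x}" for x
  define \<H> where "\<H> = {H. subgroup H G \<and> finite (rcosets H) \<and> card (rcosets H) \<le> K}"
  have pX: "dc G \<mu> \<le> measure_pmf.prob \<mu> X + \<alpha> / 4"
    unfolding X_def by (rule dc_bound) (use \<alpha> in simp)
  have "measure_pmf.prob \<mu> X = measure_pmf.prob \<mu> (X \<inter> set_pmf \<mu>)"
    by (simp add: measure_Int_set_pmf)
  also have "\<dots> \<le> measure_pmf.prob \<mu> X'"
    unfolding X'_def by (rule measure_pmf.finite_measure_mono) (use pon in auto)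
  finally have pX': "measure_pmf.prob \<mu> X' > \<alpha> / 4" using pX dcb by simp
  have X'c: "X' \<subseteq> carrier G" unfolding X'_def by blast
  have Cz_in: "Cz x \<in> \<H>" if x: "x \<in> X'" for x
  proof -
    have xc: "x \<in> carrier G" using x X'c by blast
    have sg: "subgroup (Cz x) G" unfolding Cz_def by (rule centralizer_subgroup[OF xc])
    have "measure_pmf.prob \<mu> {y. x \<otimes> y = y \<otimes> x} = measure_pmf.prob \<mu> ({y. x \<otimes> y = y \<otimes> x} \<inter> set_pmf \<mu>)"
      by (simp add: measure_Int_set_pmf)
    also have "\<dots> \<le> measure_pmf.prob \<mu> (Cz x)"
      unfolding Cz_def by (rule measure_pmf.finite_measure_mono) (use pon in auto)
    finally have "measure_pmf.prob \<mu> (Cz x) > \<alpha> / 4" using x unfolding X'_def X_def by simp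
    then show ?thesis using det[OF sg] sg unfolding \<H>_def by blast
  qed
  define Y where "Y = generate G X'"
  have Ysg: "subgroup Y G" unfolding Y_def by (rule generate_is_subgroup[OF X'c])
  have "X' \<subseteq> Y" unfolding Y_def
  proof
    fix x assume "x \<in> X'" then show "x \<in> generate G X'" by (rule generate.incl)
  qed
  then have "measure_pmf.prob \<mu> X' \<le> measure_pmf.prob \<mu> Y"
    by (rule measure_pmf.finite_measure_mono) simp
  then have "measure_pmf.prob \<mu> Y > \<alpha> / 4" using pX' by simp
  then have Yi: "finite (rcosets Y)" "card (rcosets Y) \<le> K" using det[OF Ysg] by auto
  define F where "F = Cz ` X'"
  have FH: "F \<subseteq> \<H>" unfolding F_def using Cz_in by blast
  have cnt: "finite \<H>" "card \<H> \<le> card (codes r K)"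
    using count_subgroups[OF S fS cS gen K] unfolding \<H>_def by auto
  have fF: "finite F" using finite_subset[OF FH cnt(1)] .
  have cF: "card F \<le> card (codes r K)" using card_mono[OF cnt(1) FH] cnt(2) by simp
  define D where "D = carrier G \<inter> \<Inter>F"
  have Di: "subgroup D G" "finite (rcosets D)" "card (rcosets D) \<le> K ^ card F"
    using index_Inter[OF fF] FH unfolding D_def \<H>_def by auto
  have "K ^ card F \<le> K ^ card (codes r K)" using cF K by (rule power_increasing)
  then have Dc: "card (rcosets D) \<le> K ^ card (codes r K)" using Di(3) by simp
  define A where "A = D \<inter> Y"
  have Asg: "subgroup A G" unfolding A_def by (rule subgroups_Inter_pair[OF Di(1) Ysg])
  have Ai: "finite (rcosets A)" "card (rcosets A) \<le> card (rcosets D) * card (rcosets Y)"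
    using index_Int[OF Di(1) Ysg Di(2) Yi(1)] unfolding A_def by auto
  have "card (rcosets D) * card (rcosets Y) \<le> K ^ card (codes r K) * K"
    using Dc Yi(2) by (rule mult_mono) auto
  then have Ac: "card (rcosets A) \<le> K ^ card (codes r K) * K" using Ai(2) by simp
  have comm: "\<forall>x\<in>A. \<forall>y\<in>A. x \<otimes> y = y \<otimes> x"
  proof (intro ballI)
    fix a b assume a: "a \<in> A" and b: "b \<in> A"
    have ac: "a \<in> carrier G" using a unfolding A_def D_def by blast
    have com: "a \<otimes> x = x \<otimes> a" if x: "x \<in> X'" for x
    proof -
      have "Cz x \<in> F" unfolding F_def using x by blast
      then have "a \<in> Cz x" using a unfolding A_def D_def by blast
      then show ?thesis unfolding Cz_def by simp
    qed
    have bY: "b \<in> generate G X'" using b unfolding A_def Y_def by blast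
    show "a \<otimes> b = b \<otimes> a" by (rule commute_generate[of a X' b, OF ac X'c com bY])
  qed
  show ?thesis using Asg comm Ai(1) Ac by blast
qed

theorem theorem1p10:
  fixes r :: nat and \<pi> :: "real \<Rightarrow> real" and \<alpha> :: real
  assumes "\<forall>\<gamma>\<in>{0<..1}. \<pi> \<gamma> \<in> {0<..1}"
    and "mono_on {0<..1} \<pi>"
    and "(\<pi> \<longlongrightarrow> 0) (at_right 0)"
    and "\<alpha> > 0"
  shows "\<exists>C::nat. \<forall>(G :: nat monoid) (\<mu> :: nat \<Rightarrow> nat pmf).
           group G \<longrightarrow>
           (\<exists>S. S \<subseteq> carrier G \<and> finite S \<and> card S \<le> r \<and> generate G S = carrier G) \<longrightarrow>
           (\<forall>n. prob_on G (\<mu> n)) \<longrightarrow>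
           detects_index_uniformly G \<mu> \<pi> \<longrightarrow>
           dc_seq G \<mu> \<ge> ereal \<alpha> \<longrightarrow>
           (\<exists>H. subgroup H G \<and> (\<forall>x\<in>H. \<forall>y\<in>H. x \<otimes>\<^bsub>G\<^esub> y = y \<otimes>\<^bsub>G\<^esub> x) \<and>
                finite (rcosets\<^bsub>G\<^esub> H) \<and> card (rcosets\<^bsub>G\<^esub> H) \<le> C)"
proof -
  have a8: "\<alpha> / 8 > 0" using assms(4) by simp
  have "eventually (\<lambda>t. \<pi> t < \<alpha> / 8) (at_right 0)"
    using order_tendstoD(2)[OF assms(3) a8] .
  then obtain \<delta> :: real where \<delta>: "\<delta> > 0" "\<And>t. t > 0 \<Longrightarrow> t < \<delta> \<Longrightarrow> \<pi> t < \<alpha> / 8"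
    unfolding eventually_at_right_field by auto
  define m0 where "m0 = Suc (nat \<lceil>1 / \<delta>\<rceil>)"
  have m0pos: "m0 \<ge> 1" unfolding m0_def by simp
  have "1 / \<delta> \<le> real (nat \<lceil>1 / \<delta>\<rceil>)" by linarith
  then have "1 / \<delta> < real m0" unfolding m0_def by simp
  then have "1 < real m0 * \<delta>" using \<delta>(1) by (simp add: field_simps)
  then have lt: "1 / real m0 < \<delta>" using m0pos by (simp add: field_simps)
  have gt: "1 / real m0 > 0" using m0pos by simp
  have pim: "\<pi> (1 / real m0) < \<alpha> / 8" using \<delta>(2)[OF gt lt] .
  define K where "K = m0"
  define C where "C = K ^ card (codes r K) * K"
  have K1: "K \<ge> 1" unfolding K_def using m0pos .
  show ?thesis
  proof (rule exI[of _ C], intro allI impI)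
    fix G :: "nat monoid" and \<mu> :: "nat \<Rightarrow> nat pmf"
    assume grp: "group G"
      and gS: "\<exists>S. S \<subseteq> carrier G \<and> finite S \<and> card S \<le> r \<and> generate G S = carrier G"
      and pon: "\<forall>n. prob_on G (\<mu> n)" and det: "detects_index_uniformly G \<mu> \<pi>"
      and dcs: "ereal \<alpha> \<le> dc_seq G \<mu>"
    obtain S where S: "S \<subseteq> carrier G" "finite S" "card S \<le> r" "generate G S = carrier G"
      using gS by blast
    obtain N where N: "\<And>m H n. m \<ge> 1 \<Longrightarrow> subgroup H G \<and> index_ge G H m \<Longrightarrow> n \<ge> N \<Longrightarrow>
        measure_pmf.prob (\<mu> n) H \<le> \<pi> (1 / real m) + \<alpha> / 8"
      using det a8 unfolding detects_index_uniformly_def by meson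
    have "\<exists>n\<ge>N. dc G (\<mu> n) > \<alpha> / 2"
    proof (rule ccontr)
      assume "\<not> (\<exists>n\<ge>N. dc G (\<mu> n) > \<alpha> / 2)"
      then have "\<forall>n\<ge>N. ereal (dc G (\<mu> n)) \<le> ereal (\<alpha> / 2)" by auto
      then have "eventually (\<lambda>n. ereal (dc G (\<mu> n)) \<le> ereal (\<alpha> / 2)) sequentially"
        unfolding eventually_sequentially by blast
      then have "dc_seq G \<mu> \<le> ereal (\<alpha> / 2)" unfolding dc_seq_def by (rule Limsup_bounded)
      then have "ereal \<alpha> \<le> ereal (\<alpha> / 2)" using dcs by (rule order_trans[rotated])
      then have "\<alpha> \<le> \<alpha> / 2" by simp
      then show False using assms(4) by simp
    qed
    then obtain n where n: "n \<ge> N" "dc G (\<mu> n) > \<alpha> / 2" by blast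
    have detH: "finite (rcosets\<^bsub>G\<^esub> H) \<and> card (rcosets\<^bsub>G\<^esub> H) \<le> K"
      if H: "subgroup H G" and p: "measure_pmf.prob (\<mu> n) H > \<alpha> / 4" for H
    proof (rule ccontr)
      assume "\<not> (finite (rcosets\<^bsub>G\<^esub> H) \<and> card (rcosets\<^bsub>G\<^esub> H) \<le> K)"
      then have "index_ge G H m0" unfolding index_ge_def K_def by auto
      then have "measure_pmf.prob (\<mu> n) H \<le> \<pi> (1 / real m0) + \<alpha> / 8"
        using N[OF m0pos _ n(1)] H by blast
      then show False using pim p by simp
    qed
    have pon': "set_pmf (\<mu> n) \<subseteq> carrier G" using pon unfolding prob_on_def by blast
    have "\<exists>H. subgroup H G \<and> (\<forall>x\<in>H. \<forall>y\<in>H. x \<otimes>\<^bsub>G\<^esub> y = y \<otimes>\<^bsub>G\<^esub> x) \<and>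
                finite (rcosets\<^bsub>G\<^esub> H) \<and> card (rcosets\<^bsub>G\<^esub> H) \<le> K ^ card (codes r K) * K"
      by (rule group.main_bound[OF grp S(1) S(2) S(3) S(4) K1 pon' detH n(2) assms(4)])
    then show "\<exists>H. subgroup H G \<and> (\<forall>x\<in>H. \<forall>y\<in>H. x \<otimes>\<^bsub>G\<^esub> y = y \<otimes>\<^bsub>G\<^esub> x) \<and>
                finite (rcosets\<^bsub>G\<^esub> H) \<and> card (rcosets\<^bsub>G\<^esub> H) \<le> C"
      unfolding C_def .
  qed
qed

end
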